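(* Let $K$ be a field, $R=\bigoplus_{m\ge0}R_m$ an $\mathbb N$-graded $K$-algebra and let $A$ be a graded right double Ore extension of $R$ with generators $x_1,x_2$, relation $x_2x_1=p_{12}x_1x_2+p_{11}x_1^2+\tau_1x_1+\tau_2x_2+\tau_0$, and maps $\sigma=(\sigma_{ij})$, $\delta=(\delta_1,\delta_2)^T$. If $p_{11}=0$, $p_{12}\neq0$, $\sigma_{12}=\sigma_{21}=0$, and $\sigma_{11},\sigma_{22}$ are automorphisms of $R$, then $A$ is a graded skew PBW extension of $R$.
   Context: A $K$-algebra $B\supseteq R$ is a right double Ore extension of $R$ if: it is generated by $R$ and $x_1,x_2$; $x_2x_1=p_{12}x_1x_2+p_{11}x_1^2+\tau_1x_1+\tau_2x_2+\tau_0$ with $p_{12},p_{11}\in K$, $\tau_i\in R$; $B$ is a free left $R$-module with basis $\{x_1^ax_2^b\}_{a,b\ge0}$; and $x_1R+x_2R\subseteq Rx_1+Rx_2+R$. The maps $\sigma_{ij},\delta_i$ are defined by $x_ir=\sigma_{i1}(r)x_1+\sigma_{i2}(r)x_2+\delta_i(r)$. It is graded if all its relations are homogeneous with $\deg x_1=\deg x_2=1$. A ring $A$ is a skew PBW extension of $R$ in $x_1,\dots,x_n$ if $R\subseteq A$; $A$ is a free left $R$-module with basis the monomials $x_1^{\alpha_1}\cdots x_n^{\alpha_n}$; for each $i$ and $r\ne0$ there is $c_{i,r}\ne0$ in $R$ with $x_ir-c_{i,r}x_i\in R$; for all $i,j$ there is $c_{i,j}\in R\setminus\{0\}$ with $x_jx_i-c_{i,j}x_ix_j\in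 R+Rx_1+\cdots+Rx_n$. Then $x_ir=\sigma_i(r)x_i+\delta_i(r)$ with $\sigma_i$ an injective endomorphism and $\delta_i$ a $\sigma_i$-derivation. It is bijective if all $\sigma_i$ are bijective and all $c_{i,j}$ invertible. A graded skew PBW extension is a bijective skew PBW extension of an $\mathbb N$-graded $R$ such that each $\sigma_i$ is graded, $\delta_i(R_m)\subseteq R_{m+1}$, and $x_jx_i-c_{i,j}x_ix_j\in R_2+R_1x_1+\cdots+R_1x_n$ with $c_{i,j}\in R_0$. *)

theory Defs
  imports Main
begin

(* Conventions: the ambient ring A (the extension) is the whole type 'a::ring_1.
   The field K is represented by its (isomorphic) image in A: a central subfield. *)

definition subring :: "'a::ring_1 set \<Rightarrow> bool" where
  "subring S \<longleftrightarrow> 0 \<in> S \<and> 1 \<in> S \<and> (\<forall>a\<in>S. - a \<in> S) \<and>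
     (\<forall>a\<in>S. \<forall>b\<in>S. a + b \<in> S \<and> a * b \<in> S)"

definition central_subfield :: "'a::ring_1 set \<Rightarrow> bool" where
  "central_subfield K \<longleftrightarrow> subring K \<and>
     (\<forall>k\<in>K. k \<noteq> 0 \<longrightarrow> (\<exists>k'\<in>K. k * k' = 1 \<and> k' * k = 1)) \<and>
     (\<forall>k\<in>K. \<forall>a. k * a = a * k)"

definition graded_ring :: "'a::ring_1 set \<Rightarrow> (nat \<Rightarrow> 'a set) \<Rightarrow> bool" where
  "graded_ring R Rg \<longleftrightarrow> subring R \<and>
     (\<forall>m. Rg m \<subseteq> R \<and> 0 \<in> Rg m \<and> (\<forall>a\<in>Rg m. \<forall>b\<in>Rg m. a + b \<in> Rg m \<and> - a \<in> Rg m)) \<and>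
     1 \<in> Rg 0 \<and>
     (\<forall>i j. \<forall>a\<in>Rg i. \<forall>b\<in>Rg j. a * b \<in> Rg (i + j)) \<and>
     (\<forall>r\<in>R. \<exists>!c::nat \<Rightarrow> 'a. (\<forall>m. c m \<in> Rg m) \<and> finite {m. c m \<noteq> 0} \<and>
                r = (\<Sum>m\<in>{m. c m \<noteq> 0}. c m))"

definition graded_K_algebra :: "'a::ring_1 set \<Rightarrow> 'a set \<Rightarrow> (nat \<Rightarrow> 'a set) \<Rightarrow> bool" where
  "graded_K_algebra K R Rg \<longleftrightarrow> K \<subseteq> R \<and> graded_ring R Rg \<and>
     (\<forall>m. \<forall>k\<in>K. \<forall>a\<in>Rg m. k * a \<in> Rg m)"

inductive_set ring_gen :: "'a::ring_1 set \<Rightarrow> 'a set" for S where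
  base: "a \<in> S \<Longrightarrow> a \<in> ring_gen S"
| zero: "0 \<in> ring_gen S"
| one: "1 \<in> ring_gen S"
| neg: "a \<in> ring_gen S \<Longrightarrow> - a \<in> ring_gen S"
| add: "a \<in> ring_gen S \<Longrightarrow> b \<in> ring_gen S \<Longrightarrow> a + b \<in> ring_gen S"
| mult: "a \<in> ring_gen S \<Longrightarrow> b \<in> ring_gen S \<Longrightarrow> a * b \<in> ring_gen S"

definition free_basis2 :: "'a::ring_1 set \<Rightarrow> 'a \<Rightarrow> 'a \<Rightarrow> bool" where
  "free_basis2 R x1 x2 \<longleftrightarrow> (\<forall>u::'a. \<exists>!f::nat \<times> nat \<Rightarrow> 'a.
      (\<forall>ab. f ab \<in> R) \<and> finite {ab. f ab \<noteq> 0} \<and>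
      u = (\<Sum>(a,b)\<in>{ab. f ab \<noteq> 0}. f (a,b) * (x1 ^ a * x2 ^ b)))"

definition right_double_ore ::
  "'a::ring_1 set \<Rightarrow> 'a set \<Rightarrow> 'a \<Rightarrow> 'a \<Rightarrow> 'a \<Rightarrow> 'a \<Rightarrow> 'a \<Rightarrow> 'a \<Rightarrow> 'a \<Rightarrow> bool" where
  "right_double_ore K R x1 x2 p12 p11 t1 t2 t0 \<longleftrightarrow>
     K \<subseteq> R \<and> subring R \<and>
     (\<forall>u. u \<in> ring_gen (R \<union> {x1, x2})) \<and>
     p12 \<in> K \<and> p11 \<in> K \<and> t1 \<in> R \<and> t2 \<in> R \<and> t0 \<in> R \<and>
     x2 * x1 = p12 * x1 * x2 + p11 * x1 ^ 2 + t1 * x1 + t2 * x2 + t0 \<and>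
     free_basis2 R x1 x2 \<and>
     (\<forall>r\<in>R. \<exists>a\<in>R. \<exists>b\<in>R. \<exists>c\<in>R. x1 * r = a * x1 + b * x2 + c) \<and>
     (\<forall>r\<in>R. \<exists>a\<in>R. \<exists>b\<in>R. \<exists>c\<in>R. x2 * r = a * x1 + b * x2 + c)"

definition double_ore_maps ::
  "'a::ring_1 set \<Rightarrow> 'a \<Rightarrow> 'a \<Rightarrow> ('a \<Rightarrow> 'a) \<Rightarrow> ('a \<Rightarrow> 'a) \<Rightarrow> ('a \<Rightarrow> 'a) \<Rightarrow> ('a \<Rightarrow> 'a)
     \<Rightarrow> ('a \<Rightarrow> 'a) \<Rightarrow> ('a \<Rightarrow> 'a) \<Rightarrow> bool" where
  "double_ore_maps R x1 x2 s11 s12 s21 s22 d1 d2 \<longleftrightarrow>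
     (\<forall>r\<in>R. s11 r \<in> R \<and> s12 r \<in> R \<and> s21 r \<in> R \<and> s22 r \<in> R \<and> d1 r \<in> R \<and> d2 r \<in> R \<and>
        x1 * r = s11 r * x1 + s12 r * x2 + d1 r \<and>
        x2 * r = s21 r * x1 + s22 r * x2 + d2 r)"

(* graded right double Ore extension: all relations homogeneous, deg x1 = deg x2 = 1 *)
definition graded_right_double_ore ::
  "'a::ring_1 set \<Rightarrow> 'a set \<Rightarrow> (nat \<Rightarrow> 'a set) \<Rightarrow> 'a \<Rightarrow> 'a \<Rightarrow> 'a \<Rightarrow> 'a \<Rightarrow> 'a \<Rightarrow> 'a \<Rightarrow> 'a
     \<Rightarrow> ('a \<Rightarrow> 'a) \<Rightarrow> ('a \<Rightarrow> 'a) \<Rightarrow> ('a \<Rightarrow> 'a) \<Rightarrow> ('a \<Rightarrow> 'a) \<Rightarrow> ('a \<Rightarrow> 'a) \<Rightarrow> ('a \<Rightarrow> 'a) \<Rightarrow> bool" where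
  "graded_right_double_ore K R Rg x1 x2 p12 p11 t1 t2 t0 s11 s12 s21 s22 d1 d2 \<longleftrightarrow>
     right_double_ore K R x1 x2 p12 p11 t1 t2 t0 \<and>
     double_ore_maps R x1 x2 s11 s12 s21 s22 d1 d2 \<and>
     t1 \<in> Rg 1 \<and> t2 \<in> Rg 1 \<and> t0 \<in> Rg 2 \<and>
     (\<forall>m. \<forall>r\<in>Rg m. s11 r \<in> Rg m \<and> s12 r \<in> Rg m \<and> s21 r \<in> Rg m \<and> s22 r \<in> Rg m \<and>
                    d1 r \<in> Rg (Suc m) \<and> d2 r \<in> Rg (Suc m))"

definition ring_automorphism :: "'a::ring_1 set \<Rightarrow> ('a \<Rightarrow> 'a) \<Rightarrow> bool" where
  "ring_automorphism R f \<longleftrightarrow> bij_betw f R R \<and> f 1 = 1 \<and>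
     (\<forall>a\<in>R. \<forall>b\<in>R. f (a + b) = f a + f b \<and> f (a * b) = f a * f b)"

definition exps :: "nat \<Rightarrow> (nat \<Rightarrow> nat) set" where
  "exps n = {\<alpha>. \<forall>i. i \<notin> {1..n} \<longrightarrow> \<alpha> i = 0}"

definition monom :: "nat \<Rightarrow> (nat \<Rightarrow> 'a::ring_1) \<Rightarrow> (nat \<Rightarrow> nat) \<Rightarrow> 'a" where
  "monom n x \<alpha> = prod_list (map (\<lambda>i. x i ^ \<alpha> i) [1..<Suc n])"

definition free_monomial_basis :: "'a::ring_1 set \<Rightarrow> nat \<Rightarrow> (nat \<Rightarrow> 'a) \<Rightarrow> bool" where
  "free_monomial_basis R n x \<longleftrightarrow> (\<forall>u::'a. \<exists>!f::(nat \<Rightarrow> nat) \<Rightarrow> 'a.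
      (\<forall>\<alpha>. f \<alpha> \<in> R) \<and> (\<forall>\<alpha>. \<alpha> \<notin> exps n \<longrightarrow> f \<alpha> = 0) \<and> finite {\<alpha>. f \<alpha> \<noteq> 0} \<and>
      u = (\<Sum>\<alpha>\<in>{\<alpha>. f \<alpha> \<noteq> 0}. f \<alpha> * monom n x \<alpha>))"

definition lin_span :: "'a::ring_1 set \<Rightarrow> 'a set \<Rightarrow> nat \<Rightarrow> (nat \<Rightarrow> 'a) \<Rightarrow> 'a set" where
  "lin_span S0 S1 n x = {r0 + (\<Sum>k=1..n. r k * x k) | r0 r. r0 \<in> S0 \<and> (\<forall>k. r k \<in> S1)}"

definition skew_PBW :: "'a::ring_1 set \<Rightarrow> nat \<Rightarrow> (nat \<Rightarrow> 'a) \<Rightarrow> bool" where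
  "skew_PBW R n x \<longleftrightarrow> subring R \<and> free_monomial_basis R n x \<and>
     (\<forall>i\<in>{1..n}. \<forall>r\<in>R. r \<noteq> 0 \<longrightarrow> (\<exists>c\<in>R. c \<noteq> 0 \<and> x i * r - c * x i \<in> R)) \<and>
     (\<forall>i\<in>{1..n}. \<forall>j\<in>{1..n}. \<exists>c\<in>R. c \<noteq> 0 \<and> x j * x i - c * x i * x j \<in> lin_span R R n x)"

definition unit_in :: "'a::ring_1 set \<Rightarrow> 'a \<Rightarrow> bool" where
  "unit_in R c \<longleftrightarrow> (\<exists>c'\<in>R. c * c' = 1 \<and> c' * c = 1)"

(* sigma_i, delta_i are the (unique, by freeness) maps with x_i r = sigma_i(r) x_i + delta_i(r);
   c_{i,j} is unique by freeness as well, so existential quantification is faithful *)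
definition bijective_skew_PBW :: "'a::ring_1 set \<Rightarrow> nat \<Rightarrow> (nat \<Rightarrow> 'a) \<Rightarrow> bool" where
  "bijective_skew_PBW R n x \<longleftrightarrow> skew_PBW R n x \<and>
     (\<forall>i\<in>{1..n}. \<exists>\<sigma> \<delta>. (\<forall>r\<in>R. \<sigma> r \<in> R \<and> \<delta> r \<in> R \<and> x i * r = \<sigma> r * x i + \<delta> r) \<and>
                         bij_betw \<sigma> R R) \<and>
     (\<forall>i\<in>{1..n}. \<forall>j\<in>{1..n}. \<exists>c\<in>R. c \<noteq> 0 \<and> unit_in R c \<and>
                         x j * x i - c * x i * x j \<in> lin_span R R n x)"

definition graded_skew_PBW :: "'a::ring_1 set \<Rightarrow> (nat \<Rightarrow> 'a set) \<Rightarrow> nat \<Rightarrow> (nat \<Rightarrow> 'a) \<Rightarrow> bool" where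
  "graded_skew_PBW R Rg n x \<longleftrightarrow> bijective_skew_PBW R n x \<and> graded_ring R Rg \<and>
     (\<forall>i\<in>{1..n}. \<exists>\<sigma> \<delta>. (\<forall>r\<in>R. \<sigma> r \<in> R \<and> \<delta> r \<in> R \<and> x i * r = \<sigma> r * x i + \<delta> r) \<and>
          (\<forall>m. \<forall>r\<in>Rg m. \<sigma> r \<in> Rg m \<and> \<delta> r \<in> Rg (Suc m))) \<and>
     (\<forall>i\<in>{1..n}. \<forall>j\<in>{1..n}. \<exists>c\<in>Rg 0. c \<noteq> 0 \<and> unit_in R c \<and>
          x j * x i - c * x i * x j \<in> lin_span (Rg 2) (Rg 1) n x)"

end

theory Submission
  imports Defs
begin

definition psi2 :: "nat \<times> nat \<Rightarrow> (nat \<Rightarrow> nat)" where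
  "psi2 ab = (\<lambda>i. if i = 1 then fst ab else if i = 2 then snd ab else 0)"

lemma psi2_inj: "inj psi2"
proof (rule injI)
  fix u v assume "psi2 u = psi2 v"
  hence "psi2 u 1 = psi2 v 1" "psi2 u 2 = psi2 v 2" by auto
  thus "u = v" by (simp add: psi2_def prod_eq_iff)
qed

lemma psi2_exps: "psi2 ab \<in> exps 2"
  by (auto simp: psi2_def exps_def)

lemma exps2_psi2: "\<alpha> \<in> exps 2 \<Longrightarrow> psi2 (\<alpha> 1, \<alpha> 2) = \<alpha>"
  unfolding psi2_def exps_def by (rule ext) auto

lemma monom2: "monom 2 x \<alpha> = x 1 ^ \<alpha> 1 * x 2 ^ \<alpha> 2"
  by (simp add: monom_def numeral_2_eq_2 upt_rec)

lemma sum_A: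
  fixes g :: "(nat \<Rightarrow> nat) \<Rightarrow> 'a::ring_1"
  assumes "\<forall>\<alpha>. \<alpha> \<notin> exps 2 \<longrightarrow> g \<alpha> = 0"
  shows "(\<Sum>\<alpha>\<in>{\<alpha>. g \<alpha> \<noteq> 0}. g \<alpha> * monom 2 (\<lambda>i. if i = 1 then x1 else x2) \<alpha>)
       = (\<Sum>(a,b)\<in>{ab. g (psi2 ab) \<noteq> 0}. g (psi2 (a,b)) * (x1 ^ a * x2 ^ b))"
proof -
  have bij: "bij_betw psi2 {ab. g (psi2 ab) \<noteq> 0} {\<alpha>. g \<alpha> \<noteq> 0}"
    unfolding bij_betw_def
  proof
    show "inj_on psi2 {ab. g (psi2 ab) \<noteq> 0}" using psi2_inj by (simp add: inj_on_def inj_def)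
    show "psi2 ` {ab. g (psi2 ab) \<noteq> 0} = {\<alpha>. g \<alpha> \<noteq> 0}"
    proof
      show "psi2 ` {ab. g (psi2 ab) \<noteq> 0} \<subseteq> {\<alpha>. g \<alpha> \<noteq> 0}" by auto
      show "{\<alpha>. g \<alpha> \<noteq> 0} \<subseteq> psi2 ` {ab. g (psi2 ab) \<noteq> 0}"
      proof
        fix \<alpha> assume h: "\<alpha> \<in> {\<alpha>. g \<alpha> \<noteq> 0}"
        hence "\<alpha> \<in> exps 2" using assms by auto
        hence "psi2 (\<alpha> 1, \<alpha> 2) = \<alpha>" by (rule exps2_psi2)
        thus "\<alpha> \<in> psi2 ` {ab. g (psi2 ab) \<noteq> 0}" using h by (metis (mono_tags, lifting) image_eqI mem_Collect_eq)
      qed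
    qed
  qed
  have "(\<Sum>\<alpha>\<in>{\<alpha>. g \<alpha> \<noteq> 0}. g \<alpha> * monom 2 (\<lambda>i. if i = 1 then x1 else x2) \<alpha>)
      = (\<Sum>ab\<in>{ab. g (psi2 ab) \<noteq> 0}. g (psi2 ab) * monom 2 (\<lambda>i. if i = 1 then x1 else x2) (psi2 ab))"
    using sum.reindex_bij_betw[OF bij, symmetric] by simp
  also have "\<dots> = (\<Sum>(a,b)\<in>{ab. g (psi2 ab) \<noteq> 0}. g (psi2 (a,b)) * (x1 ^ a * x2 ^ b))"
    by (rule sum.cong) (auto simp: monom2 psi2_def)
  finally show ?thesis .
qed

lemma free_basis_conv:
  assumes fb: "free_basis2 R x1 x2" and R0: "0 \<in> R"
  shows "free_monomial_basis R 2 (\<lambda>i. if i = 1 then x1 else x2)"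
  unfolding free_monomial_basis_def
proof
  fix u
  from fb obtain f where f: "(\<forall>ab. f ab \<in> R) \<and> finite {ab. f ab \<noteq> 0} \<and>
      u = (\<Sum>(a,b)\<in>{ab. f ab \<noteq> 0}. f (a,b) * (x1 ^ a * x2 ^ b))"
    and funi: "\<And>f'. (\<forall>ab. f' ab \<in> R) \<and> finite {ab. f' ab \<noteq> 0} \<and>
      u = (\<Sum>(a,b)\<in>{ab. f' ab \<noteq> 0}. f' (a,b) * (x1 ^ a * x2 ^ b)) \<Longrightarrow> f' = f"
    using fb[unfolded free_basis2_def, rule_format, of u] by (elim ex1E) blast
  define g where "g = (\<lambda>\<alpha>. if \<alpha> \<in> exps 2 then f (\<alpha> 1, \<alpha> 2) else 0)"
  have gpsi: "g (psi2 ab) = f ab" for ab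
    using psi2_exps[of ab] by (simp add: g_def psi2_def)
  have gout: "\<forall>\<alpha>. \<alpha> \<notin> exps 2 \<longrightarrow> g \<alpha> = 0" by (simp add: g_def)
  show "\<exists>!g. (\<forall>\<alpha>. g \<alpha> \<in> R) \<and> (\<forall>\<alpha>. \<alpha> \<notin> exps 2 \<longrightarrow> g \<alpha> = 0) \<and> finite {\<alpha>. g \<alpha> \<noteq> 0} \<and>
      u = (\<Sum>\<alpha>\<in>{\<alpha>. g \<alpha> \<noteq> 0}. g \<alpha> * monom 2 (\<lambda>i. if i = 1 then x1 else x2) \<alpha>)"
  proof (rule ex1I[of _ g], intro conjI)
    show "\<forall>\<alpha>. g \<alpha> \<in> R" using f R0 by (simp add: g_def)
    show "\<forall>\<alpha>. \<alpha> \<notin> exps 2 \<longrightarrow> g \<alpha> = 0" by (rule gout)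
    have "{\<alpha>. g \<alpha> \<noteq> 0} \<subseteq> psi2 ` {ab. f ab \<noteq> 0}"
    proof
      fix \<alpha> assume h: "\<alpha> \<in> {\<alpha>. g \<alpha> \<noteq> 0}"
      hence "\<alpha> \<in> exps 2" using gout by auto
      hence "psi2 (\<alpha> 1, \<alpha> 2) = \<alpha>" by (rule exps2_psi2)
      thus "\<alpha> \<in> psi2 ` {ab. f ab \<noteq> 0}" using h gpsi by (metis (mono_tags, lifting) image_eqI mem_Collect_eq)
    qed
    thus "finite {\<alpha>. g \<alpha> \<noteq> 0}" using f finite_subset by blast
    show "u = (\<Sum>\<alpha>\<in>{\<alpha>. g \<alpha> \<noteq> 0}. g \<alpha> * monom 2 (\<lambda>i. if i = 1 then x1 else x2) \<alpha>)"
      using f sum_A[OF gout, of x1 x2] by (simp add: gpsi)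
  next
    fix g' assume g': "(\<forall>\<alpha>. g' \<alpha> \<in> R) \<and> (\<forall>\<alpha>. \<alpha> \<notin> exps 2 \<longrightarrow> g' \<alpha> = 0) \<and> finite {\<alpha>. g' \<alpha> \<noteq> 0} \<and>
      u = (\<Sum>\<alpha>\<in>{\<alpha>. g' \<alpha> \<noteq> 0}. g' \<alpha> * monom 2 (\<lambda>i. if i = 1 then x1 else x2) \<alpha>)"
    have fin: "finite {ab. g' (psi2 ab) \<noteq> 0}"
    proof -
      have "{ab. g' (psi2 ab) \<noteq> 0} = psi2 -` {\<alpha>. g' \<alpha> \<noteq> 0}" by auto
      thus ?thesis using g' finite_vimageI psi2_inj by metis
    qed
    have gf: "(\<lambda>ab. g' (psi2 ab)) = f"
      apply (rule funi)
      using g' fin sum_A[of g' x1 x2] by simp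
    show "g' = g"
    proof
      fix \<alpha> show "g' \<alpha> = g \<alpha>"
      proof (cases "\<alpha> \<in> exps 2")
        case True
        then show ?thesis using exps2_psi2[OF True] fun_cong[OF \<open>(\<lambda>ab. g' (psi2 ab)) = f\<close>, of "(\<alpha> 1, \<alpha> 2)"]
          by (simp add: g_def)
      next
        case False
        then show ?thesis using g' by (simp add: g_def)
      qed
    qed
  qed
qed

lemma lin2:
  assumes "r0 \<in> S0" "a \<in> S1" "b \<in> S1" "0 \<in> S1"
  shows "r0 + a * x1 + b * x2 \<in> lin_span S0 S1 2 (\<lambda>i. if i = 1 then x1 else x2)"
  unfolding lin_span_def
proof (intro CollectI exI conjI)
  let ?r = "\<lambda>k::nat. if k = 1 then a else if k = 2 then b else 0"
  show "r0 + a * x1 + b * x2 = r0 + (\<Sum>k=1..2. ?r k * (if k = 1 then x1 else x2))"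
    by (simp add: numeral_2_eq_2 add.assoc)
  show "r0 \<in> S0" by fact
  show "\<forall>k. ?r k \<in> S1" using assms by auto
qed

lemma lin_mono: "S0 \<subseteq> T0 \<Longrightarrow> S1 \<subseteq> T1 \<Longrightarrow> lin_span S0 S1 n x \<subseteq> lin_span T0 T1 n x"
  unfolding lin_span_def by blast
theorem theorem3p5:
  fixes K R :: "'a::ring_1 set" and Rg :: "nat \<Rightarrow> 'a set"
    and x1 x2 p12 p11 t1 t2 t0 :: 'a
    and s11 s12 s21 s22 d1 d2 :: "'a \<Rightarrow> 'a"
  assumes "central_subfield K"
    and "graded_K_algebra K R Rg"
    and "graded_right_double_ore K R Rg x1 x2 p12 p11 t1 t2 t0 s11 s12 s21 s22 d1 d2"
    and "p11 = 0" and "p12 \<noteq> 0"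
    and "\<forall>r\<in>R. s12 r = 0" and "\<forall>r\<in>R. s21 r = 0"
    and "ring_automorphism R s11" and "ring_automorphism R s22"
  shows "graded_skew_PBW R Rg 2 (\<lambda>i. if i = 1 then x1 else x2)"
proof -
  let ?x = "\<lambda>i::nat. if i = 1 then x1 else x2"
  from assms(1) have Kp: "\<forall>k\<in>K. k \<noteq> 0 \<longrightarrow> (\<exists>k'\<in>K. k * k' = 1 \<and> k' * k = 1)"
    unfolding central_subfield_def by blast
  from assms(2) have KR: "K \<subseteq> R" and gr: "graded_ring R Rg"
    and Kmul: "\<forall>m. \<forall>k\<in>K. \<forall>a\<in>Rg m. k * a \<in> Rg m"
    unfolding graded_K_algebra_def by auto
  from gr have sR: "subring R" and RgR: "\<And>m. Rg m \<subseteq> R" and Rg0: "\<And>m. 0 \<in> Rg m"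
    and Rgneg: "\<And>m a. a \<in> Rg m \<Longrightarrow> - a \<in> Rg m" and one0: "1 \<in> Rg 0"
    unfolding graded_ring_def by auto
  from sR have R0: "0 \<in> R" and R1: "1 \<in> R" and Rneg: "\<And>a. a \<in> R \<Longrightarrow> - a \<in> R"
    unfolding subring_def by auto
  from assms(3) have ro: "right_double_ore K R x1 x2 p12 p11 t1 t2 t0"
    and dm: "double_ore_maps R x1 x2 s11 s12 s21 s22 d1 d2"
    and t1g: "t1 \<in> Rg 1" and t2g: "t2 \<in> Rg 1" and t0g: "t0 \<in> Rg 2"
    and gm: "\<forall>m. \<forall>r\<in>Rg m. s11 r \<in> Rg m \<and> s12 r \<in> Rg m \<and> s21 r \<in> Rg m \<and> s22 r \<in> Rg m \<and>
                    d1 r \<in> Rg (Suc m) \<and> d2 r \<in> Rg (Suc m)"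
    unfolding graded_right_double_ore_def by auto
  from ro have pK: "p12 \<in> K" and rel: "x2 * x1 = p12 * x1 * x2 + p11 * x1 ^ 2 + t1 * x1 + t2 * x2 + t0"
    and fb: "free_basis2 R x1 x2"
    unfolding right_double_ore_def by auto
  have rel': "x2 * x1 = p12 * x1 * x2 + t1 * x1 + t2 * x2 + t0" using rel assms(4) by simp
  from Kp pK assms(5) obtain p' where p'K: "p' \<in> K" and pp1: "p12 * p' = 1" and pp2: "p' * p12 = 1" by blast
  have one_ne: "(1::'a) \<noteq> 0"
  proof
    assume "(1::'a) = 0"
    hence "p12 = 0" by (metis mult_1_right mult_zero_right)
    thus False using assms(5) by simp
  qed
  have p'ne: "p' \<noteq> 0" using pp1 one_ne by auto
  have maps1: "\<And>r. r \<in> R \<Longrightarrow> s11 r \<in> R \<and> d1 r \<in> R \<and> x1 * r = s11 r * x1 + d1 r"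
    using dm assms(6) unfolding double_ore_maps_def by auto
  have maps2: "\<And>r. r \<in> R \<Longrightarrow> s22 r \<in> R \<and> d2 r \<in> R \<and> x2 * r = s22 r * x2 + d2 r"
    using dm assms(7) unfolding double_ore_maps_def by auto
  have bij1: "bij_betw s11 R R" using assms(8) unfolding ring_automorphism_def by auto
  have bij2: "bij_betw s22 R R" using assms(9) unfolding ring_automorphism_def by auto
  have s11_0: "s11 0 = 0"
  proof -
    have "s11 (0 + 0) = s11 0 + s11 0" using assms(8) R0 unfolding ring_automorphism_def by blast
    thus ?thesis by simp
  qed
  have s22_0: "s22 0 = 0"
  proof -
    have "s22 (0 + 0) = s22 0 + s22 0" using assms(9) R0 unfolding ring_automorphism_def by blast
    thus ?thesis by simp
  qed
  have s11_ne: "s11 r \<noteq> 0" if "r \<in> R" "r \<noteq> 0" for r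
    using bij1 that R0 s11_0 unfolding bij_betw_def inj_on_def by metis
  have s22_ne: "s22 r \<noteq> 0" if "r \<in> R" "r \<noteq> 0" for r
    using bij2 that R0 s22_0 unfolding bij_betw_def inj_on_def by metis
  have p12g: "p12 \<in> Rg 0" using Kmul pK one0 by (metis mult_1_right)
  have p'g: "p' \<in> Rg 0" using Kmul p'K one0 by (metis mult_1_right)
  have E12: "x2 * x1 - p12 * x1 * x2 = t0 + t1 * x1 + t2 * x2" using rel' by (simp add: algebra_simps)
  have E21: "x1 * x2 - p' * x2 * x1 = (- (p' * t0)) + (- (p' * t1)) * x1 + (- (p' * t2)) * x2"
  proof -
    have "p' * x2 * x1 = p' * (x2 * x1)" by (simp add: mult.assoc)
    also have "\<dots> = (p' * p12) * x1 * x2 + p' * t1 * x1 + p' * t2 * x2 + p' * t0"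
      unfolding rel' by (simp add: distrib_left mult.assoc)
    also have "\<dots> = x1 * x2 + p' * t1 * x1 + p' * t2 * x2 + p' * t0" using pp2 by simp
    finally show ?thesis by (simp add: algebra_simps)
  qed
  have G: "\<forall>i\<in>{1..2}. \<forall>j\<in>{1..2}. \<exists>c\<in>Rg 0. c \<noteq> 0 \<and> unit_in R c \<and>
          ?x j * ?x i - c * ?x i * ?x j \<in> lin_span (Rg 2) (Rg 1) 2 ?x"
  proof (intro ballI)
    fix i j :: nat assume i: "i \<in> {1..2}" and j: "j \<in> {1..2}"
    have zero_in: "0 \<in> lin_span (Rg 2) (Rg 1) 2 ?x"
      using lin2[of 0 "Rg 2" 0 "Rg 1" 0 x1 x2] Rg0 by simp
    have u1: "unit_in R 1" using R1 unfolding unit_in_def by auto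
    have up: "unit_in R p12" using p'K KR pp1 pp2 unfolding unit_in_def by auto
    have up': "unit_in R p'" using pK KR pp1 pp2 unfolding unit_in_def by auto
    have ij: "(i = 1 \<or> i = 2) \<and> (j = 1 \<or> j = 2)" using i j by auto
    show "\<exists>c\<in>Rg 0. c \<noteq> 0 \<and> unit_in R c \<and> ?x j * ?x i - c * ?x i * ?x j \<in> lin_span (Rg 2) (Rg 1) 2 ?x"
    proof (cases "i = j")
      case True
      show ?thesis
        by (rule bexI[of _ 1]) (use True zero_in u1 one_ne one0 in auto)
    next
      case False
      show ?thesis
      proof (cases "i = 1")
        case True
        hence jj: "j = 2" using False ij by auto
        show ?thesis
        proof (rule bexI[of _ p12], intro conjI)
          show "?x j * ?x i - p12 * ?x i * ?x j \<in> lin_span (Rg 2) (Rg 1) 2 ?x"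
            using True jj E12 lin2[OF t0g t1g t2g Rg0, of x1 x2] by simp
        qed (use assms(5) up p12g in auto)
      next
        case F2: False
        hence ii: "i = 2" and jj: "j = 1" using False ij by auto
        have a: "- (p' * t0) \<in> Rg 2" using Rgneg Kmul p'K t0g by blast
        have b: "- (p' * t1) \<in> Rg 1" using Rgneg Kmul p'K t1g by blast
        have c: "- (p' * t2) \<in> Rg 1" using Rgneg Kmul p'K t2g by blast
        show ?thesis
        proof (rule bexI[of _ p'], intro conjI)
          show "?x j * ?x i - p' * ?x i * ?x j \<in> lin_span (Rg 2) (Rg 1) 2 ?x"
            using ii jj E21 lin2[OF a b c Rg0, of x1 x2] by simp
        qed (use p'ne up' p'g in auto)
      qed
    qed
  qed
  have sub: "lin_span (Rg 2) (Rg 1) 2 ?x \<subseteq> lin_span R R 2 ?x" by (rule lin_mono[OF RgR RgR])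
  have G': "\<forall>i\<in>{1..2}. \<forall>j\<in>{1..2}. \<exists>c\<in>R. c \<noteq> 0 \<and> unit_in R c \<and>
          ?x j * ?x i - c * ?x i * ?x j \<in> lin_span R R 2 ?x"
    using G sub RgR by blast
  have SD: "\<forall>i\<in>{1..2::nat}. \<exists>\<sigma> \<delta>. (\<forall>r\<in>R. \<sigma> r \<in> R \<and> \<delta> r \<in> R \<and> ?x i * r = \<sigma> r * ?x i + \<delta> r) \<and>
          bij_betw \<sigma> R R \<and> (\<forall>m. \<forall>r\<in>Rg m. \<sigma> r \<in> Rg m \<and> \<delta> r \<in> Rg (Suc m))"
  proof
    fix i :: nat assume "i \<in> {1..2}"
    hence "i = 1 \<or> i = 2" by auto
    thus "\<exists>\<sigma> \<delta>. (\<forall>r\<in>R. \<sigma> r \<in> R \<and> \<delta> r \<in> R \<and> ?x i * r = \<sigma> r * ?x i + \<delta> r) \<and>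
          bij_betw \<sigma> R R \<and> (\<forall>m. \<forall>r\<in>Rg m. \<sigma> r \<in> Rg m \<and> \<delta> r \<in> Rg (Suc m))"
    proof
      assume "i = 1"
      thus ?thesis using maps1 bij1 gm by (intro exI[of _ s11] exI[of _ d1]) auto
    next
      assume "i = 2"
      thus ?thesis using maps2 bij2 gm by (intro exI[of _ s22] exI[of _ d2]) auto
    qed
  qed
  have C1: "\<forall>i\<in>{1..2::nat}. \<forall>r\<in>R. r \<noteq> 0 \<longrightarrow> (\<exists>c\<in>R. c \<noteq> 0 \<and> ?x i * r - c * ?x i \<in> R)"
  proof (intro ballI impI)
    fix i :: nat and r assume i: "i \<in> {1..2}" and r: "r \<in> R" "r \<noteq> 0"
    hence "i = 1 \<or> i = 2" by auto
    thus "\<exists>c\<in>R. c \<noteq> 0 \<and> ?x i * r - c * ?x i \<in> R"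
    proof
      assume "i = 1"
      thus ?thesis using maps1[OF r(1)] s11_ne[OF r] by (intro bexI[of _ "s11 r"]) auto
    next
      assume "i = 2"
      thus ?thesis using maps2[OF r(1)] s22_ne[OF r] by (intro bexI[of _ "s22 r"]) auto
    qed
  qed
  have C2: "\<forall>i\<in>{1..2::nat}. \<forall>j\<in>{1..2}. \<exists>c\<in>R. c \<noteq> 0 \<and> ?x j * ?x i - c * ?x i * ?x j \<in> lin_span R R 2 ?x"
    using G' by blast
  have FB: "free_monomial_basis R 2 ?x" by (rule free_basis_conv[OF fb R0])
  show ?thesis
    unfolding graded_skew_PBW_def bijective_skew_PBW_def skew_PBW_def
    using sR FB C1 C2 SD G G' gr by blast
qed

end
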